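(* Let $(A,E)$ be the direct producted noncommutative probability space over $D_N$ of noncommutative probability spaces $(A_1,\varphi_1),\dots,(A_N,\varphi_N)$. Let $i\neq j$ in $\{1,\dots,N\}$, $a_i\in A_i$, $a_j\in A_j$, and let $e_i\in A$ be the tuple with $a_i$ in the $i$-th coordinate and $0$ elsewhere, and $e_j\in A$ the tuple with $a_j$ in the $j$-th coordinate and $0$ elsewhere. Then $e_i$ and $e_j$ are free over $D_N$ in $(A,E)$.
   Context: Each $(A_j,\varphi_j)$ is a unital complex algebra with a linear functional. $A=\times_{j=1}^N A_j$ with componentwise operations; $D_N=\mathbb{C}^N$ with componentwise operations, identified with the central subalgebra $\{(\alpha_1 1,\dots,\alpha_N 1)\}$ of $A$; $E((a_1,\dots,a_N))=(\varphi_1(a_1),\dots,\varphi_N(a_N))$. $D_N$-valued cumulants: $k_n(y_1,\dots,y_n)=\sum_{\pi\in NC(n)}\prod_{V\in\pi}E(\prod_{l\in V}y_l)\,\mu(\pi,1_n)$. Elements are free over $D_N$ if all mixed $D_N$-valued cumulants of elements of the algebras they generate together with $D_N$ vanish. *)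

theory Defs
  imports Complex_Main
begin

class cplx_algebra_1 = ring_1 +
  fixes scaleC :: "complex \<Rightarrow> 'a \<Rightarrow> 'a"
  assumes scaleC_add_right: "scaleC c (x + y) = scaleC c x + scaleC c y"
    and scaleC_add_left: "scaleC (c + d) x = scaleC c x + scaleC d x"
    and scaleC_scaleC: "scaleC c (scaleC d x) = scaleC (c * d) x"
    and scaleC_one: "scaleC 1 x = x"
    and mult_scaleC_left: "scaleC c x * y = scaleC c (x * y)"
    and mult_scaleC_right: "x * scaleC c y = scaleC c (x * y)"

text \<open>The algebras A_j are modelled as unital subalgebras (carriers) of a common
  ambient unital complex algebra; (A_j, phi_j) is a noncommutative probability space.\<close>
definition ncps :: "'a::cplx_algebra_1 set \<Rightarrow> ('a \<Rightarrow> complex) \<Rightarrow> bool" where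
  "ncps A \<phi> \<longleftrightarrow>
     1 \<in> A \<and>
     (\<forall>x\<in>A. \<forall>y\<in>A. x + y \<in> A \<and> x * y \<in> A) \<and>
     (\<forall>c. \<forall>x\<in>A. scaleC c x \<in> A) \<and>
     (\<forall>x\<in>A. \<forall>y\<in>A. \<phi> (x + y) = \<phi> x + \<phi> y) \<and>
     (\<forall>c. \<forall>x\<in>A. \<phi> (scaleC c x) = c * \<phi> x) \<and>
     \<phi> 1 = 1"

text \<open>Elements of A = A_0 x ... x A_(N-1) are functions nat => 'a (coordinates
  j < N, zero for j >= N); elements of D_N = C^N are functions nat => complex
  (zero for j >= N).\<close>

definition prodA :: "nat \<Rightarrow> (nat \<Rightarrow> 'a::cplx_algebra_1 set) \<Rightarrow> (nat \<Rightarrow> 'a) set" where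
  "prodA N A = {x. (\<forall>j<N. x j \<in> A j) \<and> (\<forall>j. N \<le> j \<longrightarrow> x j = 0)}"

definition dn :: "nat \<Rightarrow> (nat \<Rightarrow> complex) \<Rightarrow> nat \<Rightarrow> 'a::cplx_algebra_1" where
  "dn N \<alpha> = (\<lambda>m. if m < N then scaleC (\<alpha> m) 1 else 0)"

definition condE :: "nat \<Rightarrow> (nat \<Rightarrow> 'a::cplx_algebra_1 \<Rightarrow> complex) \<Rightarrow> (nat \<Rightarrow> 'a) \<Rightarrow> nat \<Rightarrow> complex" where
  "condE N \<phi> x = (\<lambda>m. if m < N then \<phi> m (x m) else 0)"

definition single :: "nat \<Rightarrow> 'a::cplx_algebra_1 \<Rightarrow> nat \<Rightarrow> 'a" where
  "single i a = (\<lambda>m. if m = i then a else 0)"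

definition is_partition :: "nat set set \<Rightarrow> nat set \<Rightarrow> bool" where
  "is_partition P S \<longleftrightarrow>
     (\<forall>V\<in>P. V \<noteq> {} \<and> V \<subseteq> S) \<and> (\<forall>V\<in>P. \<forall>W\<in>P. V \<noteq> W \<longrightarrow> V \<inter> W = {}) \<and> \<Union>P = S"

definition noncrossing :: "nat set set \<Rightarrow> bool" where
  "noncrossing P \<longleftrightarrow>
     (\<forall>V\<in>P. \<forall>W\<in>P. V \<noteq> W \<longrightarrow>
        \<not> (\<exists>a b c d. a < b \<and> b < c \<and> c < d \<and> a \<in> V \<and> c \<in> V \<and> b \<in> W \<and> d \<in> W))"

definition NC :: "nat \<Rightarrow> nat set set set" where
  "NC n = {P. is_partition P {0..<n} \<and> noncrossing P}"

definition refines :: "nat set set \<Rightarrow> nat set set \<Rightarrow> bool" where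
  "refines P Q \<longleftrightarrow> (\<forall>V\<in>P. \<exists>W\<in>Q. V \<subseteq> W)"

definition one_part :: "nat \<Rightarrow> nat set set" where
  "one_part n = {{0..<n}}"

definition mobius :: "'p set \<Rightarrow> ('p \<Rightarrow> 'p \<Rightarrow> bool) \<Rightarrow> 'p \<Rightarrow> 'p \<Rightarrow> int" where
  "mobius P le = (THE \<mu>.
      (\<forall>x\<in>P. \<forall>y\<in>P. if le x y
           then (\<Sum>z\<in>{z\<in>P. le x z \<and> le z y}. \<mu> x z) = (if x = y then 1 else 0)
           else \<mu> x y = 0) \<and>
      (\<forall>x y. x \<notin> P \<or> y \<notin> P \<longrightarrow> \<mu> x y = 0))"

definition blockprod :: "(nat \<Rightarrow> nat \<Rightarrow> 'a::cplx_algebra_1) \<Rightarrow> nat set \<Rightarrow> nat \<Rightarrow> 'a" where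
  "blockprod y V = (\<lambda>m. prod_list (map (\<lambda>l. y l m) (sorted_list_of_set V)))"

definition cumulant :: "nat \<Rightarrow> (nat \<Rightarrow> 'a::cplx_algebra_1 \<Rightarrow> complex) \<Rightarrow> nat
     \<Rightarrow> (nat \<Rightarrow> nat \<Rightarrow> 'a) \<Rightarrow> nat \<Rightarrow> complex" where
  "cumulant N \<phi> n y = (\<lambda>m. \<Sum>\<pi>\<in>NC n.
      (\<Prod>V\<in>\<pi>. condE N \<phi> (blockprod y V) m) * of_int (mobius (NC n) refines \<pi> (one_part n)))"

inductive_set gen_alg :: "nat \<Rightarrow> (nat \<Rightarrow> 'a::cplx_algebra_1) set \<Rightarrow> (nat \<Rightarrow> 'a) set"
  for N :: nat and S :: "(nat \<Rightarrow> 'a) set" where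
  base: "x \<in> S \<Longrightarrow> x \<in> gen_alg N S"
| scal: "dn N \<alpha> \<in> gen_alg N S"
| add: "x \<in> gen_alg N S \<Longrightarrow> y \<in> gen_alg N S \<Longrightarrow> (\<lambda>m. x m + y m) \<in> gen_alg N S"
| mult: "x \<in> gen_alg N S \<Longrightarrow> y \<in> gen_alg N S \<Longrightarrow> (\<lambda>m. x m * y m) \<in> gen_alg N S"

definition free_algs :: "nat \<Rightarrow> (nat \<Rightarrow> 'a::cplx_algebra_1 \<Rightarrow> complex) \<Rightarrow> 'i set
     \<Rightarrow> ('i \<Rightarrow> (nat \<Rightarrow> 'a) set) \<Rightarrow> bool" where
  "free_algs N \<phi> I B \<longleftrightarrow>
     (\<forall>n c y. (\<forall>l<n. c l \<in> I \<and> y l \<in> B (c l)) \<and> (\<exists>l<n. \<exists>l'<n. c l \<noteq> c l')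
        \<longrightarrow> cumulant N \<phi> n y = (\<lambda>_. 0))"

definition free_elems :: "nat \<Rightarrow> (nat \<Rightarrow> 'a::cplx_algebra_1 \<Rightarrow> complex) \<Rightarrow> 'i set
     \<Rightarrow> ('i \<Rightarrow> nat \<Rightarrow> 'a) \<Rightarrow> bool" where
  "free_elems N \<phi> I x \<longleftrightarrow> free_algs N \<phi> I (\<lambda>k. gen_alg N {x k})"

end

theory Submission
  imports Defs
begin


definition mob_spec :: "'p set \<Rightarrow> ('p \<Rightarrow> 'p \<Rightarrow> bool) \<Rightarrow> ('p \<Rightarrow> 'p \<Rightarrow> int) \<Rightarrow> bool" where
  "mob_spec P le \<mu> \<longleftrightarrow>
      (\<forall>x\<in>P. \<forall>y\<in>P. if le x y
           then (\<Sum>z\<in>{z\<in>P. le x z \<and> le z y}. \<mu> x z) = (if x = y then 1 else 0)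
           else \<mu> x y = 0) \<and>
      (\<forall>x y. x \<notin> P \<or> y \<notin> P \<longrightarrow> \<mu> x y = 0)"

definition porder :: "'p set \<Rightarrow> ('p \<Rightarrow> 'p \<Rightarrow> bool) \<Rightarrow> bool" where
  "porder P le \<longleftrightarrow> finite P \<and> (\<forall>x\<in>P. le x x) \<and>
     (\<forall>x\<in>P. \<forall>y\<in>P. \<forall>z\<in>P. le x y \<longrightarrow> le y z \<longrightarrow> le x z) \<and>
     (\<forall>x\<in>P. \<forall>y\<in>P. le x y \<longrightarrow> le y x \<longrightarrow> x = y)"

definition ivl :: "'p set \<Rightarrow> ('p \<Rightarrow> 'p \<Rightarrow> bool) \<Rightarrow> 'p \<Rightarrow> 'p \<Rightarrow> 'p set" where
  "ivl P le x y = {z\<in>P. le x z \<and> le z y}"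

function mu_fn :: "'p set \<Rightarrow> ('p \<Rightarrow> 'p \<Rightarrow> bool) \<Rightarrow> 'p \<Rightarrow> 'p \<Rightarrow> int" where
  "mu_fn P le x y = (if x \<in> P \<and> y \<in> P \<and> le x y then (if x = y then 1 else
     - (\<Sum>z\<in>{z\<in>P. le x z \<and> le z y \<and> z \<noteq> y \<and> card (ivl P le x z) < card (ivl P le x y)}. mu_fn P le x z))
     else 0)"
  by pat_completeness auto
termination by (relation "measure (\<lambda>(P,le,x,y). card (ivl P le x y))") auto

declare mu_fn.simps[simp del]

lemma ivl_less:
  assumes "porder P le" "x \<in> P" "y \<in> P" "z \<in> P" "le x z" "le z y" "z \<noteq> y"
  shows "card (ivl P le x z) < card (ivl P le x y)"
proof (rule psubset_card_mono)
  show "finite (ivl P le x y)" using assms(1) unfolding porder_def ivl_def by auto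
  have "ivl P le x z \<subseteq> ivl P le x y" using assms unfolding porder_def ivl_def by blast
  moreover have "y \<in> ivl P le x y" using assms unfolding porder_def ivl_def by blast
  moreover have "y \<notin> ivl P le x z" using assms unfolding porder_def ivl_def by blast
  ultimately show "ivl P le x z \<subset> ivl P le x y" by blast
qed

lemma mu_fn_spec:
  assumes po: "porder P le"
  shows "mob_spec P le (mu_fn P le)"
  unfolding mob_spec_def
proof (intro conjI ballI allI impI)
  fix x y assume "x \<notin> P \<or> y \<notin> P" then show "mu_fn P le x y = 0" by (auto simp: mu_fn.simps)
next
  fix x y assume x: "x \<in> P" and y: "y \<in> P"
  have fin: "finite P" using po unfolding porder_def by auto
  show "if le x y then (\<Sum>z\<in>{z\<in>P. le x z \<and> le z y}. mu_fn P le x z) = (if x = y then 1 else 0)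
           else mu_fn P le x y = 0"
  proof (cases "le x y")
    case False then show ?thesis by (auto simp: mu_fn.simps)
  next
    case True
    have split: "{z\<in>P. le x z \<and> le z y} = insert y {z\<in>P. le x z \<and> le z y \<and> z \<noteq> y}" using True y po unfolding porder_def by blast
    have eqs: "{z\<in>P. le x z \<and> le z y \<and> z \<noteq> y \<and> card (ivl P le x z) < card (ivl P le x y)}
        = {z\<in>P. le x z \<and> le z y \<and> z \<noteq> y}" using ivl_less[OF po x y] by auto
    show ?thesis
    proof (cases "x = y")
      case True
      have "{z\<in>P. le x z \<and> le z y} = {x}"
      proof (rule set_eqI, rule iffI)
        fix z assume "z \<in> {z\<in>P. le x z \<and> le z y}"
        then show "z \<in> {x}" using True x po unfolding porder_def by blast
      next
        fix z assume "z \<in> {x}" then show "z \<in> {z\<in>P. le x z \<and> le z y}"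
          using True x po unfolding porder_def by blast
      qed
      then show ?thesis using True x by (simp add: mu_fn.simps)
    next
      case False
      have "mu_fn P le x y = - (\<Sum>z\<in>{z\<in>P. le x z \<and> le z y \<and> z \<noteq> y}. mu_fn P le x z)"
        using False x y \<open>le x y\<close> eqs by (subst mu_fn.simps) simp
      then show ?thesis using split fin False \<open>le x y\<close> by (simp add: sum.insert)
    qed
  qed
qed

lemma mob_spec_unique:
  assumes po: "porder P le" and s1: "mob_spec P le m1" and s2: "mob_spec P le m2"
  shows "m1 = m2"
proof -
  have fin: "finite P" using po unfolding porder_def by auto
  have key: "\<And>m x y. mob_spec P le m \<Longrightarrow> x \<in> P \<Longrightarrow> y \<in> P \<Longrightarrow> le x y \<Longrightarrow>
     m x y = (if x = y then 1 else 0) - (\<Sum>z\<in>{z\<in>P. le x z \<and> le z y \<and> z \<noteq> y}. m x z)"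
  proof -
    fix m x y assume sp: "mob_spec P le m" and x: "x \<in> P" and y: "y \<in> P" and le: "le x y"
    have split: "{z\<in>P. le x z \<and> le z y} = insert y {z\<in>P. le x z \<and> le z y \<and> z \<noteq> y}" using le y po unfolding porder_def by blast
    have "(\<Sum>z\<in>{z\<in>P. le x z \<and> le z y}. m x z) = (if x = y then 1 else 0)"
      using sp x y le unfolding mob_spec_def by metis
    then show "m x y = (if x = y then 1 else 0) - (\<Sum>z\<in>{z\<in>P. le x z \<and> le z y \<and> z \<noteq> y}. m x z)"
      using split fin by (simp add: sum.insert)
  qed
  have main: "\<And>k x y. card (ivl P le x y) = k \<Longrightarrow> m1 x y = m2 x y"
  proof -
    fix k show "\<And>x y. card (ivl P le x y) = k \<Longrightarrow> m1 x y = m2 x y"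
    proof (induction k rule: less_induct)
      case (less k)
      fix x y assume c: "card (ivl P le x y) = k"
      show "m1 x y = m2 x y"
      proof (cases "x \<in> P \<and> y \<in> P")
        case False then show ?thesis using s1 s2 unfolding mob_spec_def by metis
      next
        case True
        then have x: "x \<in> P" and y: "y \<in> P" by auto
        show ?thesis
        proof (cases "le x y")
          case False then show ?thesis using s1 s2 x y unfolding mob_spec_def by metis
        next
          case le: True
          have "\<And>z. z \<in> {z\<in>P. le x z \<and> le z y \<and> z \<noteq> y} \<Longrightarrow> m1 x z = m2 x z"
            using less ivl_less[OF po x y] c by auto
          then have "(\<Sum>z\<in>{z\<in>P. le x z \<and> le z y \<and> z \<noteq> y}. m1 x z) = (\<Sum>z\<in>{z\<in>P. le x z \<and> le z y \<and> z \<noteq> y}. m2 x z)"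
            by (rule sum.cong[OF refl])
          then show ?thesis using key[OF s1 x y le] key[OF s2 x y le] by simp
        qed
      qed
    qed
  qed
  show ?thesis using main by blast
qed

lemma mobius_spec:
  assumes po: "porder P le"
  shows "mob_spec P le (mobius P le)"
proof -
  have "\<exists>!m. mob_spec P le m" using mu_fn_spec[OF po] mob_spec_unique[OF po] by blast
  then have "mob_spec P le (THE m. mob_spec P le m)" by (rule theI')
  then show ?thesis unfolding mobius_def mob_spec_def .
qed



lemma porderD:
  assumes "porder P le"
  shows "finite P" "\<And>x. x \<in> P \<Longrightarrow> le x x"
    "\<And>x y z. x \<in> P \<Longrightarrow> y \<in> P \<Longrightarrow> z \<in> P \<Longrightarrow> le x y \<Longrightarrow> le y z \<Longrightarrow> le x z"
    "\<And>x y. x \<in> P \<Longrightarrow> y \<in> P \<Longrightarrow> le x y \<Longrightarrow> le y x \<Longrightarrow> x = y"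
  using assms unfolding porder_def by blast+

lemma up_less:
  assumes po: "porder P le" and x: "x \<in> P" and z: "z \<in> P" and le: "le x z" and ne: "z \<noteq> x"
  shows "card {w\<in>P. le z w} < card {w\<in>P. le x w}"
proof (rule psubset_card_mono)
  show "finite {w\<in>P. le x w}" using porderD(1)[OF po] by auto
  have "{w\<in>P. le z w} \<subseteq> {w\<in>P. le x w}" using porderD(3)[OF po x z] le by blast
  moreover have "x \<notin> {w\<in>P. le z w}" using porderD(4)[OF po x z] le ne by blast
  moreover have "x \<in> {w\<in>P. le x w}" using porderD(2)[OF po x] x by blast
  ultimately show "{w\<in>P. le z w} \<subset> {w\<in>P. le x w}" by blast
qed

lemma mob_spec_D:
  assumes "mob_spec P le m" "x \<in> P" "y \<in> P" "le x y"
  shows "(\<Sum>z\<in>{z\<in>P. le x z \<and> le z y}. m x z) = (if x = y then 1 else 0)"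
  using assms unfolding mob_spec_def by metis

lemma mob_spec_D2:
  assumes "mob_spec P le m" "x \<in> P" "y \<in> P" "\<not> le x y"
  shows "m x y = 0"
  using assms unfolding mob_spec_def by metis

lemma mob_spec_diag:
  assumes po: "porder P le" and sp: "mob_spec P le m" and x: "x \<in> P"
  shows "m x x = 1"
proof -
  have "{z\<in>P. le x z \<and> le z x} = {x}" using porderD[OF po] x by blast
  then show ?thesis using mob_spec_D[OF sp x x porderD(2)[OF po x]] by simp
qed

lemma dual_mobius:
  assumes po: "porder P le" and sp: "mob_spec P le m" and y: "y \<in> P"
    and top: "\<And>p. p \<in> P \<Longrightarrow> le p y" and x: "x \<in> P"
  shows "(\<Sum>z\<in>{z\<in>P. le x z}. m z y) = (if x = y then 1 else 0)"
proof -
  note fin = porderD(1)[OF po]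
  define H where "H z = (\<Sum>w\<in>{w\<in>P. le z w}. m w y) - (if z = y then 1 else 0)" for z
  have A: "(\<Sum>z\<in>{z\<in>P. le x z}. m x z * H z) = 0" if x: "x \<in> P" for x
  proof -
    have "(\<Sum>z\<in>{z\<in>P. le x z}. m x z * (\<Sum>w\<in>{w\<in>P. le z w}. m w y))
        = (\<Sum>z\<in>P. \<Sum>w\<in>P. if le x z \<and> le z w then m x z * m w y else 0)"
    proof -
      have "(\<Sum>z\<in>{z\<in>P. le x z}. m x z * (\<Sum>w\<in>{w\<in>P. le z w}. m w y))
          = (\<Sum>z\<in>P. if le x z then m x z * (\<Sum>w\<in>{w\<in>P. le z w}. m w y) else 0)"
        by (rule sum.inter_filter[OF fin])
      also have "\<dots> = (\<Sum>z\<in>P. \<Sum>w\<in>P. if le x z \<and> le z w then m x z * m w y else 0)"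
      proof (rule sum.cong[OF refl])
        fix z assume "z \<in> P"
        have "m x z * (\<Sum>w\<in>{w\<in>P. le z w}. m w y) = (\<Sum>w\<in>{w\<in>P. le z w}. m x z * m w y)"
          by (simp add: sum_distrib_left)
        also have "\<dots> = (\<Sum>w\<in>P. if le z w then m x z * m w y else 0)"
          by (rule sum.inter_filter[OF fin])
        finally show "(if le x z then m x z * (\<Sum>w\<in>{w\<in>P. le z w}. m w y) else 0)
           = (\<Sum>w\<in>P. if le x z \<and> le z w then m x z * m w y else 0)" by simp
      qed
      finally show ?thesis .
    qed
    also have "\<dots> = (\<Sum>w\<in>P. \<Sum>z\<in>P. if le x z \<and> le z w then m x z * m w y else 0)"
      by (rule sum.swap)
    also have "\<dots> = (\<Sum>w\<in>P. m w y * (\<Sum>z\<in>{z\<in>P. le x z \<and> le z w}. m x z))"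
    proof (rule sum.cong[OF refl])
      fix w assume "w \<in> P"
      have "m w y * (\<Sum>z\<in>{z\<in>P. le x z \<and> le z w}. m x z) = (\<Sum>z\<in>{z\<in>P. le x z \<and> le z w}. m x z * m w y)"
        by (simp add: sum_distrib_left mult.commute)
      also have "\<dots> = (\<Sum>z\<in>P. if le x z \<and> le z w then m x z * m w y else 0)"
        by (rule sum.inter_filter[OF fin])
      finally show "(\<Sum>z\<in>P. if le x z \<and> le z w then m x z * m w y else 0) = m w y * (\<Sum>z\<in>{z\<in>P. le x z \<and> le z w}. m x z)" by simp
    qed
    also have "\<dots> = (\<Sum>w\<in>P. if w = x then m w y else 0)"
    proof (rule sum.cong[OF refl])
      fix w assume w: "w \<in> P"
      show "m w y * (\<Sum>z\<in>{z\<in>P. le x z \<and> le z w}. m x z) = (if w = x then m w y else 0)"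
      proof (cases "le x w")
        case True then show ?thesis using mob_spec_D[OF sp x w] by auto
      next
        case False
        then have E: "{z\<in>P. le x z \<and> le z w} = {}" using porderD(3)[OF po x _ w] by blast
        have "(\<Sum>z\<in>{z\<in>P. le x z \<and> le z w}. m x z) = 0" by (simp only: E sum.empty)
        moreover have "w \<noteq> x" using False porderD(2)[OF po x] by auto
        ultimately show ?thesis by simp
      qed
    qed
    also have "\<dots> = m x y" using x fin by simp
    finally have 1: "(\<Sum>z\<in>{z\<in>P. le x z}. m x z * (\<Sum>w\<in>{w\<in>P. le z w}. m w y)) = m x y" .
    have 2: "(\<Sum>z\<in>{z\<in>P. le x z}. m x z * (if z = y then 1 else 0)) = m x y"
    proof -
      have "(\<Sum>z\<in>{z\<in>P. le x z}. m x z * (if z = y then 1 else 0)) = (\<Sum>z\<in>{z\<in>P. le x z}. if z = y then m x y else 0)"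
        by (rule sum.cong) auto
      also have "\<dots> = m x y" using fin y top[OF x] by (simp add: sum.delta)
      finally show ?thesis .
    qed
    show ?thesis unfolding H_def using 1 2 by (simp add: right_diff_distrib sum_subtractf)
  qed
  have B: "\<And>k x. x \<in> P \<Longrightarrow> card {w\<in>P. le x w} = k \<Longrightarrow> H x = 0"
  proof -
    fix k show "\<And>x. x \<in> P \<Longrightarrow> card {w\<in>P. le x w} = k \<Longrightarrow> H x = 0"
    proof (induction k rule: less_induct)
      case (less k x)
      have split: "{z\<in>P. le x z} = insert x {z\<in>P. le x z \<and> z \<noteq> x}" using porderD(2)[OF po] less.prems by blast
      have "\<And>z. z \<in> {z\<in>P. le x z \<and> z \<noteq> x} \<Longrightarrow> H z = 0"
        using less.IH up_less[OF po less.prems(1)] less.prems(2) by blast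
      then have "(\<Sum>z\<in>{z\<in>P. le x z \<and> z \<noteq> x}. m x z * H z) = 0" by simp
      then have "m x x * H x = 0" using A[OF less.prems(1)] split fin by (simp add: sum.insert)
      then show "H x = 0" using mob_spec_diag[OF po sp less.prems(1)] by simp
    qed
  qed
  show ?thesis using B[OF x refl] unfolding H_def by simp
qed

lemma porder_subset: "porder P le \<Longrightarrow> K \<subseteq> P \<Longrightarrow> porder K le"
  unfolding porder_def by (meson finite_subset subsetD)

lemma kernel_sum:
  fixes f :: "'p \<Rightarrow> 'b::comm_ring_1" and h :: "'p \<Rightarrow> int"
  assumes po: "porder P le" and sP: "\<And>p. p \<in> P \<Longrightarrow> s p \<in> P"
    and b: "\<And>\<sigma> p. \<sigma> \<in> s ` P \<Longrightarrow> p \<in> P \<Longrightarrow> le \<sigma> (s p) \<longleftrightarrow> le \<sigma> p"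
    and c: "\<And>\<sigma>. \<sigma> \<in> s ` P \<Longrightarrow> (\<Sum>p\<in>{p\<in>P. le \<sigma> p}. h p) = 0"
    and feq: "\<And>p. p \<in> P \<Longrightarrow> f p = f (s p)"
  shows "(\<Sum>p\<in>P. f p * of_int (h p)) = 0"
proof -
  note fin = porderD(1)[OF po]
  define K where "K = s ` P"
  have KP: "K \<subseteq> P" using sP K_def by auto
  have poK: "porder K le" by (rule porder_subset[OF po KP])
  have finK: "finite K" using fin K_def by auto
  define g where "g \<sigma> = (\<Sum>p\<in>{p\<in>P. s p = \<sigma>}. h p)" for \<sigma>
  have up: "(\<Sum>\<tau>\<in>{\<tau>\<in>K. le \<sigma> \<tau>}. g \<tau>) = 0" if sK: "\<sigma> \<in> K" for \<sigma>
  proof -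
    have "{p\<in>P. le \<sigma> p} = {p\<in>P. le \<sigma> (s p)}" using b sK K_def by auto
    then have "0 = (\<Sum>p\<in>{p\<in>P. le \<sigma> (s p)}. h p)" using c sK K_def by metis
    also have "\<dots> = (\<Sum>\<tau>\<in>{\<tau>\<in>K. le \<sigma> \<tau>}. \<Sum>p\<in>{x. x \<in> {p\<in>P. le \<sigma> (s p)} \<and> s x = \<tau>}. h p)"
      by (rule sum.group[symmetric]) (use fin finK K_def in auto)
    also have "\<dots> = (\<Sum>\<tau>\<in>{\<tau>\<in>K. le \<sigma> \<tau>}. g \<tau>)"
      unfolding g_def by (rule sum.cong[OF refl]) (rule sum.cong, auto)
    finally show ?thesis by simp
  qed
  have gz: "\<And>k \<sigma>. \<sigma> \<in> K \<Longrightarrow> card {w\<in>K. le \<sigma> w} = k \<Longrightarrow> g \<sigma> = 0"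
  proof -
    fix k show "\<And>\<sigma>. \<sigma> \<in> K \<Longrightarrow> card {w\<in>K. le \<sigma> w} = k \<Longrightarrow> g \<sigma> = 0"
    proof (induction k rule: less_induct)
      case (less k \<sigma>)
      have split: "{w\<in>K. le \<sigma> w} = insert \<sigma> {w\<in>K. le \<sigma> w \<and> w \<noteq> \<sigma>}"
        using porderD(2)[OF poK] less.prems by blast
      have "\<And>z. z \<in> {w\<in>K. le \<sigma> w \<and> w \<noteq> \<sigma>} \<Longrightarrow> g z = 0"
        using less.IH up_less[OF poK less.prems(1)] less.prems(2) by blast
      then have "(\<Sum>z\<in>{w\<in>K. le \<sigma> w \<and> w \<noteq> \<sigma>}. g z) = 0" by simp
      then show "g \<sigma> = 0" using up[OF less.prems(1)] split finK by (simp add: sum.insert)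
    qed
  qed
  have "(\<Sum>p\<in>P. f p * of_int (h p)) = (\<Sum>p\<in>P. f (s p) * of_int (h p))"
    using feq by simp
  also have "\<dots> = (\<Sum>\<sigma>\<in>K. \<Sum>p\<in>{x. x \<in> P \<and> s x = \<sigma>}. f (s p) * of_int (h p))"
    by (rule sum.group[symmetric]) (use fin finK K_def in auto)
  also have "\<dots> = (\<Sum>\<sigma>\<in>K. f \<sigma> * of_int (g \<sigma>))"
    unfolding g_def by (rule sum.cong[OF refl]) (simp add: sum_distrib_left)
  also have "\<dots> = 0" using gz by simp
  finally show ?thesis .
qed



definition sp :: "nat \<Rightarrow> nat set set \<Rightarrow> nat set set" where
  "sp l0 p = insert {l0} ((\<lambda>V. V - {l0}) ` p - {{}})"

lemma NC_fin: "finite (NC n)"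
proof (rule finite_subset)
  show "NC n \<subseteq> Pow (Pow {0..<n})" unfolding NC_def is_partition_def by auto
qed auto

lemma NC_porder: "porder (NC n) refines"
  unfolding porder_def
proof (intro conjI ballI impI)
  show "finite (NC n)" by (rule NC_fin)
next
  fix x assume "x \<in> NC n" then show "refines x x" unfolding refines_def by auto
next
  fix x y z assume "refines x y" "refines y z" then show "refines x z"
    unfolding refines_def by (meson order_trans)
next
  fix x y assume x: "x \<in> NC n" and y: "y \<in> NC n" and xy: "refines x y" and yx: "refines y x"
  have px: "is_partition x {0..<n}" and py: "is_partition y {0..<n}" using x y unfolding NC_def by auto
  have sub: "x \<subseteq> y" if t1: "is_partition x {0..<n}" and t2: "is_partition y {0..<n}" and t3: "refines x y" and t4: "refines y x" for x y
  proof
    fix V assume V: "V \<in> x"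
    then obtain W where W: "W \<in> y" "V \<subseteq> W" using t3 unfolding refines_def by blast
    then obtain V' where V': "V' \<in> x" "W \<subseteq> V'" using t4 unfolding refines_def by blast
    have "V \<noteq> {}" using t1 V unfolding is_partition_def by auto
    moreover have "V \<inter> V' \<noteq> {}" using W V' \<open>V \<noteq> {}\<close> by blast
    moreover have "\<forall>A\<in>x. \<forall>B\<in>x. A \<noteq> B \<longrightarrow> A \<inter> B = {}" using t1 unfolding is_partition_def by blast
    ultimately have "V = V'" using V V'(1) by blast
    then have "V = W" using W V' by auto
    then show "V \<in> y" using W by simp
  qed
  show "x = y" using sub[OF px py xy yx] sub[OF py px yx xy] by auto
qed

lemma one_part_NC: "n \<ge> 1 \<Longrightarrow> one_part n \<in> NC n"
  unfolding NC_def one_part_def is_partition_def noncrossing_def by simp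

lemma refines_one: "p \<in> NC n \<Longrightarrow> refines p (one_part n)"
  unfolding NC_def one_part_def is_partition_def refines_def by simp

lemma sp_NC:
  assumes p: "p \<in> NC n" and l0: "l0 < n"
  shows "sp l0 p \<in> NC n"
proof -
  have part: "is_partition p {0..<n}" and nc: "noncrossing p" using p unfolding NC_def by auto
  have "is_partition (sp l0 p) {0..<n}"
    unfolding is_partition_def
  proof (intro conjI ballI impI)
    fix V assume "V \<in> sp l0 p" then show "V \<noteq> {}" unfolding sp_def by auto
  next
    fix V assume "V \<in> sp l0 p"
    moreover have "\<And>A. A \<in> p \<Longrightarrow> A \<subseteq> {0..<n}" using part unfolding is_partition_def by blast
    ultimately show "V \<subseteq> {0..<n}" using l0 unfolding sp_def by auto
  next
    fix V W assume V: "V \<in> sp l0 p" and W: "W \<in> sp l0 p" and ne: "V \<noteq> W"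
    have dj: "\<And>A B. A \<in> p \<Longrightarrow> B \<in> p \<Longrightarrow> A \<noteq> B \<Longrightarrow> A \<inter> B = {}"
      using part unfolding is_partition_def by blast
    show "V \<inter> W = {}"
    proof (cases "V = {l0} \<or> W = {l0}")
      case True
      then show ?thesis using V W ne unfolding sp_def by auto
    next
      case False
      then obtain V0 W0 where "V0 \<in> p" "V = V0 - {l0}" "W0 \<in> p" "W = W0 - {l0}"
        using V W unfolding sp_def by auto
      then show ?thesis using dj[of V0 W0] ne by auto
    qed
  next
    have u: "\<Union> p = {0..<n}" using part unfolding is_partition_def by blast
    show "\<Union> (sp l0 p) = {0..<n}"
    proof
      show "\<Union> (sp l0 p) \<subseteq> {0..<n}" using u l0 unfolding sp_def by auto
    next
      show "{0..<n} \<subseteq> \<Union> (sp l0 p)"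
      proof
        fix x assume x: "x \<in> {0..<n}"
        show "x \<in> \<Union> (sp l0 p)"
        proof (cases "x = l0")
          case True then show ?thesis unfolding sp_def by auto
        next
          case False
          have "x \<in> \<Union> p" using u x by simp
          then obtain V0 where "V0 \<in> p" "x \<in> V0" by blast
          then have "V0 - {l0} \<in> sp l0 p" "x \<in> V0 - {l0}" using False unfolding sp_def by auto
          then show ?thesis by blast
        qed
      qed
    qed
  qed
  moreover have "noncrossing (sp l0 p)"
    unfolding noncrossing_def
  proof (intro ballI impI notI)
    fix V W assume V: "V \<in> sp l0 p" and W: "W \<in> sp l0 p" and ne: "V \<noteq> W"
      and ex: "\<exists>a b c d. a < b \<and> b < c \<and> c < d \<and> a \<in> V \<and> c \<in> V \<and> b \<in> W \<and> d \<in> W"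
    then obtain a b c d where abcd: "a < b" "b < c" "c < d" "a \<in> V" "c \<in> V" "b \<in> W" "d \<in> W" by blast
    have "V \<noteq> {l0}" using abcd by auto
    then obtain V0 where V0: "V0 \<in> p" "V = V0 - {l0}" using V unfolding sp_def by auto
    have "W \<noteq> {l0}" using abcd by auto
    then obtain W0 where W0: "W0 \<in> p" "W = W0 - {l0}" using W unfolding sp_def by auto
    have "V0 \<noteq> W0" using V0 W0 ne by auto
    moreover have "a \<in> V0" "c \<in> V0" "b \<in> W0" "d \<in> W0" using abcd V0 W0 by auto
    moreover have h: "\<not> (\<exists>a b c d. a < b \<and> b < c \<and> c < d \<and> a \<in> V0 \<and> c \<in> V0 \<and> b \<in> W0 \<and> d \<in> W0)"
      using mp[OF bspec[OF bspec[OF nc[unfolded noncrossing_def] V0(1)] W0(1)] \<open>V0 \<noteq> W0\<close>] .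
    have "\<exists>a b c d. a < b \<and> b < c \<and> c < d \<and> a \<in> V0 \<and> c \<in> V0 \<and> b \<in> W0 \<and> d \<in> W0"
      by (rule exI[of _ a], rule exI[of _ b], rule exI[of _ c], rule exI[of _ d])
         (use abcd \<open>a \<in> V0\<close> \<open>c \<in> V0\<close> \<open>b \<in> W0\<close> \<open>d \<in> W0\<close> in simp)
    then show False using h by blast
  qed
  ultimately show ?thesis unfolding NC_def by simp
qed

lemma sp_refines:
  assumes p: "p \<in> NC n" and l0: "l0 < n"
  shows "refines (sp l0 p) p"
proof -
  have part: "is_partition p {0..<n}" using p unfolding NC_def by auto
  then have "l0 \<in> \<Union> p" using l0 unfolding is_partition_def by auto
  then obtain V0 where "V0 \<in> p" "l0 \<in> V0" by blast
  then show ?thesis unfolding refines_def sp_def by auto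
qed

lemma sp_refines_iff:
  assumes r: "r \<in> NC n" and p: "p \<in> NC n" and l0: "l0 < n"
  shows "refines (sp l0 r) (sp l0 p) \<longleftrightarrow> refines (sp l0 r) p"
proof
  assume "refines (sp l0 r) (sp l0 p)"
  then show "refines (sp l0 r) p" using sp_refines[OF p l0] unfolding refines_def by (meson order_trans)
next
  assume h: "refines (sp l0 r) p"
  show "refines (sp l0 r) (sp l0 p)"
    unfolding refines_def
  proof
    fix V assume V: "V \<in> sp l0 r"
    show "\<exists>W\<in>sp l0 p. V \<subseteq> W"
    proof (cases "V = {l0}")
      case True then show ?thesis unfolding sp_def by auto
    next
      case False
      then obtain V0 where V0: "V = V0 - {l0}" "V \<noteq> {}" using V unfolding sp_def by auto
      obtain U where U: "U \<in> p" "V \<subseteq> U" using h V unfolding refines_def by blast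
      have "V \<subseteq> U - {l0}" using U V0 by auto
      moreover have "U - {l0} \<in> sp l0 p" using U V0 \<open>V \<subseteq> U - {l0}\<close> unfolding sp_def by auto
      ultimately show ?thesis by blast
    qed
  qed
qed

lemma sp_not_one:
  assumes "n \<ge> 2" shows "sp l0 r \<noteq> one_part n"
proof
  assume h: "sp l0 r = one_part n"
  have "{l0} \<in> sp l0 r" unfolding sp_def by simp
  then have "{l0} \<in> {{0..<n}}" using h unfolding one_part_def by simp
  then have eq: "{l0} = {0..<n}" by simp
  have "(0::nat) \<in> {0..<n}" "(1::nat) \<in> {0..<n}" using assms by auto
  then have "(0::nat) \<in> {l0}" "(1::nat) \<in> {l0}" by (simp_all only: eq)
  then show False by simp
qed



lemma scaleC_zero_left: "scaleC 0 (x::'a::cplx_algebra_1) = 0"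
proof -
  have "scaleC 0 x = scaleC (0 + 0) x" by simp
  also have "\<dots> = scaleC 0 x + scaleC 0 x" by (rule scaleC_add_left)
  finally show ?thesis by simp
qed

lemma scal_mult: "scaleC c (1::'a::cplx_algebra_1) * scaleC d 1 = scaleC (c * d) 1"
  by (simp add: mult_scaleC_left mult_scaleC_right scaleC_scaleC mult.commute)

lemma prod_list_scal:
  fixes g :: "nat \<Rightarrow> 'a::cplx_algebra_1"
  assumes "distinct xs" "l0 \<in> set xs" "g l0 = scaleC c 1"
  shows "prod_list (map g xs) = scaleC c (prod_list (map g (remove1 l0 xs)))"
  using assms
proof (induction xs)
  case Nil then show ?case by simp
next
  case (Cons x xs)
  show ?case
  proof (cases "x = l0")
    case True
    then show ?thesis using Cons.prems by (simp add: mult_scaleC_left)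
  next
    case False
    then have "prod_list (map g xs) = scaleC c (prod_list (map g (remove1 l0 xs)))"
      using Cons by simp
    then show ?thesis using False by (simp add: mult_scaleC_right)
  qed
qed

lemma ncpsD:
  assumes "ncps A \<phi>"
  shows "1 \<in> A" "\<And>x y. x \<in> A \<Longrightarrow> y \<in> A \<Longrightarrow> x + y \<in> A" "\<And>x y. x \<in> A \<Longrightarrow> y \<in> A \<Longrightarrow> x * y \<in> A"
    "\<And>x. x \<in> A \<Longrightarrow> scaleC c x \<in> A" "\<And>x. x \<in> A \<Longrightarrow> \<phi> (scaleC c x) = c * \<phi> x" "\<phi> 1 = 1"
  using assms unfolding ncps_def by blast+

lemma prod_list_in:
  assumes "ncps A \<phi>" "\<forall>x\<in>set xs. x \<in> A"
  shows "prod_list xs \<in> A"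
  using assms(2) by (induction xs) (auto intro: ncpsD[OF assms(1)])

lemma gen_alg_props:
  assumes ncp: "\<forall>k<N. ncps (A k) (\<phi> k)" and i: "i < N" and a: "a \<in> A i"
    and x: "x \<in> gen_alg N {single i a}"
  shows "(\<forall>m<N. x m \<in> A m) \<and> (\<forall>m<N. m \<noteq> i \<longrightarrow> (\<exists>c. x m = scaleC c 1))"
  using x
proof (induction rule: gen_alg.induct)
  case (base x)
  then have xe: "x = single i a" by simp
  have 1: "\<forall>m<N. x m \<in> A m"
  proof (intro allI impI)
    fix m assume m: "m < N"
    have z: "(0::'a) \<in> A m" using ncpsD(4)[OF ncp[rule_format, OF m] ncpsD(1)[OF ncp[rule_format, OF m]], of 0]
      by (simp add: scaleC_zero_left)
    show "x m \<in> A m" using xe a z unfolding single_def by auto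
  qed
  have 2: "\<forall>m<N. m \<noteq> i \<longrightarrow> (\<exists>c. x m = scaleC c 1)"
    using xe scaleC_zero_left[of "1::'a"] unfolding single_def by metis
  show ?case using 1 2 by blast
next
  case (scal \<alpha>)
  have "\<forall>m<N. dn N \<alpha> m \<in> A m"
    using ncpsD(4)[OF ncp[rule_format] ncpsD(1)[OF ncp[rule_format]]] unfolding dn_def by simp
  moreover have "\<forall>m<N. m \<noteq> i \<longrightarrow> (\<exists>c. dn N \<alpha> m = scaleC c (1::'a))" unfolding dn_def by auto
  ultimately show ?case by blast
next
  case (add x y)
  have "\<forall>m<N. x m + y m \<in> A m" using add.IH ncpsD(2)[OF ncp[rule_format]] by blast
  moreover have "\<forall>m<N. m \<noteq> i \<longrightarrow> (\<exists>c. x m + y m = scaleC c (1::'a))"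
  proof (intro allI impI)
    fix m assume "m < N" "m \<noteq> i"
    then obtain c d where "x m = scaleC c 1" "y m = scaleC d 1" using add.IH by blast
    then have "x m + y m = scaleC (c + d) 1" by (simp add: scaleC_add_left)
    then show "\<exists>c. x m + y m = scaleC c (1::'a)" by blast
  qed
  ultimately show ?case by blast
next
  case (mult x y)
  have "\<forall>m<N. x m * y m \<in> A m" using mult.IH ncpsD(3)[OF ncp[rule_format]] by blast
  moreover have "\<forall>m<N. m \<noteq> i \<longrightarrow> (\<exists>c. x m * y m = scaleC c (1::'a))"
  proof (intro allI impI)
    fix m assume "m < N" "m \<noteq> i"
    then obtain c d where "x m = scaleC c 1" "y m = scaleC d 1" using mult.IH by blast
    then have "x m * y m = scaleC (c * d) 1" by (simp add: scal_mult)
    then show "\<exists>c. x m * y m = scaleC c (1::'a)" by blast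
  qed
  ultimately show ?case by blast
qed


lemma block_scal:
  assumes ncp: "ncps Am \<phi>m" and fin: "finite V" and l0: "l0 \<in> V"
    and inA: "\<forall>l\<in>V. y l m \<in> Am" and sc: "y l0 m = scaleC c 1"
  shows "\<phi>m (blockprod y V m) = c * \<phi>m (blockprod y (V - {l0}) m)"
proof -
  have "blockprod y V m = prod_list (map (\<lambda>l. y l m) (sorted_list_of_set V))"
    unfolding blockprod_def by simp
  also have "\<dots> = scaleC c (prod_list (map (\<lambda>l. y l m) (remove1 l0 (sorted_list_of_set V))))"
    by (rule prod_list_scal) (use fin l0 sc in auto)
  also have "remove1 l0 (sorted_list_of_set V) = sorted_list_of_set (V - {l0})"
    using fin by (simp add: sorted_list_of_set_remove)
  finally have eq: "blockprod y V m = scaleC c (blockprod y (V - {l0}) m)"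
    unfolding blockprod_def by simp
  have "blockprod y (V - {l0}) m \<in> Am"
    unfolding blockprod_def using fin inA by (auto intro!: prod_list_in[OF ncp])
  then show ?thesis using eq ncpsD(5)[OF ncp] by simp
qed

lemma F_sp:
  assumes ncp: "ncps Am \<phi>m" and p: "p \<in> NC n" and l0: "l0 < n"
    and inA: "\<forall>l<n. y l m \<in> Am" and sc: "y l0 m = scaleC c 1"
  shows "(\<Prod>V\<in>p. \<phi>m (blockprod y V m)) = (\<Prod>V\<in>sp l0 p. \<phi>m (blockprod y V m))"
proof -
  define q where "q V = \<phi>m (blockprod y V m)" for V
  have part: "is_partition p {0..<n}" using p unfolding NC_def by auto
  have "finite (\<Union> p)" using part unfolding is_partition_def by simp
  then have finp: "finite p" by (rule finite_UnionD)
  have sub: "\<And>V. V \<in> p \<Longrightarrow> V \<subseteq> {0..<n}" using part unfolding is_partition_def by blast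
  have dj: "\<And>A B. A \<in> p \<Longrightarrow> B \<in> p \<Longrightarrow> A \<noteq> B \<Longrightarrow> A \<inter> B = {}"
    using part unfolding is_partition_def by blast
  have ne: "\<And>V. V \<in> p \<Longrightarrow> V \<noteq> {}" using part unfolding is_partition_def by blast
  have "l0 \<in> \<Union> p" using part l0 unfolding is_partition_def by auto
  then obtain V0 where V0: "V0 \<in> p" "l0 \<in> V0" by blast
  have qV: "q V = c * q (V - {l0})" if "V \<in> p" "l0 \<in> V" for V
  proof -
    have fV: "finite V" using sub[OF that(1)] finite_subset by blast
    have iV: "\<forall>l\<in>V. y l m \<in> Am" using sub[OF that(1)] inA by auto
    show ?thesis unfolding q_def by (rule block_scal[of Am \<phi>m V l0 y m c, OF ncp fV that(2) iV sc])
  qed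
  have q0: "q {} = 1" unfolding q_def blockprod_def using ncpsD(6)[OF ncp] by simp
  have other: "\<And>V. V \<in> p - {V0} \<Longrightarrow> l0 \<notin> V" using dj V0 by blast
  have "(\<Prod>V\<in>p. q V) = q V0 * (\<Prod>V\<in>p - {V0}. q V)"
    using finp V0 by (simp add: prod.remove)
  also have "\<dots> = c * (q (V0 - {l0}) * (\<Prod>V\<in>p - {V0}. q (V - {l0})))"
  proof -
    have "(\<Prod>V\<in>p - {V0}. q V) = (\<Prod>V\<in>p - {V0}. q (V - {l0}))"
      by (rule prod.cong[OF refl]) (use other in simp)
    then show ?thesis using qV[OF V0] by simp
  qed
  also have "q (V0 - {l0}) * (\<Prod>V\<in>p - {V0}. q (V - {l0})) = (\<Prod>V\<in>p. q (V - {l0}))"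
    using finp V0 by (simp add: prod.remove)
  finally have L: "(\<Prod>V\<in>p. q V) = c * (\<Prod>V\<in>p. q (V - {l0}))" .
  have inj: "inj_on (\<lambda>V. V - {l0}) p"
  proof (rule inj_onI)
    fix V W assume V: "V \<in> p" and W: "W \<in> p" and eq: "V - {l0} = W - {l0}"
    show "V = W"
    proof (rule ccontr)
      assume "V \<noteq> W"
      then have d: "V \<inter> W = {}" using dj V W by blast
      then have "V - {l0} = {}" using eq by blast
      then have "V = {l0}" using ne[OF V] by blast
      moreover have "W - {l0} = {}" using eq \<open>V - {l0} = {}\<close> by simp
      then have "W = {l0}" using ne[OF W] by blast
      ultimately show False using \<open>V \<noteq> W\<close> by simp
    qed
  qed
  define img where "img = (\<lambda>V. V - {l0}) ` p"
  have finimg: "finite img" using finp img_def by simp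
  have "(\<Prod>V\<in>p. q (V - {l0})) = (\<Prod>V\<in>img. q V)"
    unfolding img_def using prod.reindex[OF inj, of q] by (simp add: comp_def)
  also have "\<dots> = (\<Prod>V\<in>img - {{}}. q V)"
  proof (cases "{} \<in> img")
    case True
    then show ?thesis using finimg q0 by (simp add: prod.remove)
  next
    case False then show ?thesis by simp
  qed
  finally have M: "(\<Prod>V\<in>p. q (V - {l0})) = (\<Prod>V\<in>img - {{}}. q V)" .
  have nin: "{l0} \<notin> img - {{}}" unfolding img_def by auto
  have "(\<Prod>V\<in>sp l0 p. q V) = q {l0} * (\<Prod>V\<in>img - {{}}. q V)"
    unfolding sp_def img_def[symmetric] using finimg nin by simp
  moreover have "q {l0} = c"
  proof -
    have f1: "finite {l0}" by simp
    have i1: "l0 \<in> {l0}" by simp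
    have a1: "\<forall>l\<in>{l0}. y l m \<in> Am" using inA l0 by auto
    have "q {l0} = c * q ({l0} - {l0})" unfolding q_def
      by (rule block_scal[of Am \<phi>m "{l0}" l0 y m c, OF ncp f1 i1 a1 sc])
    then show ?thesis using q0 by simp
  qed
  ultimately show ?thesis using L M unfolding q_def by simp
qed



lemma scalar_cumulant_zero:
  assumes ncp: "ncps Am \<phi>m" and n2: "n \<ge> 2" and l0: "l0 < n"
    and inA: "\<forall>l<n. y l m \<in> Am" and sc: "y l0 m = scaleC c 1"
  shows "(\<Sum>\<pi>\<in>NC n. (\<Prod>V\<in>\<pi>. \<phi>m (blockprod y V m)) * of_int (mobius (NC n) refines \<pi> (one_part n))) = 0"
proof (rule kernel_sum[OF NC_porder, where s = "sp l0"])
  show "\<And>p. p \<in> NC n \<Longrightarrow> sp l0 p \<in> NC n" using sp_NC l0 by blast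
  show "\<And>\<sigma> p. \<sigma> \<in> sp l0 ` NC n \<Longrightarrow> p \<in> NC n \<Longrightarrow> refines \<sigma> (sp l0 p) = refines \<sigma> p"
    using sp_refines_iff l0 by blast
  show "\<And>p. p \<in> NC n \<Longrightarrow> (\<Prod>V\<in>p. \<phi>m (blockprod y V m)) = (\<Prod>V\<in>sp l0 p. \<phi>m (blockprod y V m))"
    using F_sp[of Am \<phi>m _ n l0 y m c, OF ncp _ l0 inA sc] by blast
  fix \<sigma> assume s: "\<sigma> \<in> sp l0 ` NC n"
  then obtain r where r: "r \<in> NC n" "\<sigma> = sp l0 r" by blast
  have sN: "\<sigma> \<in> NC n" using r sp_NC l0 by blast
  have ne: "\<sigma> \<noteq> one_part n" using r sp_not_one n2 by blast
  have top: "one_part n \<in> NC n" using one_part_NC n2 by simp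
  show "(\<Sum>p\<in>{p \<in> NC n. refines \<sigma> p}. mobius (NC n) refines p (one_part n)) = 0"
    using dual_mobius[OF NC_porder mobius_spec[OF NC_porder] top refines_one sN] ne by simp
qed

theorem mainTheorem4:
  fixes N :: nat and A :: "nat \<Rightarrow> 'a::cplx_algebra_1 set"
    and \<phi> :: "nat \<Rightarrow> 'a \<Rightarrow> complex" and i j :: nat and ai aj :: 'a
  assumes "\<forall>k<N. ncps (A k) (\<phi> k)"
    and "i < N" and "j < N" and "i \<noteq> j"
    and "ai \<in> A i" and "aj \<in> A j"
  shows "free_elems N \<phi> (UNIV :: bool set)
           (\<lambda>b. if b then single i ai else single j aj)"
  unfolding free_elems_def free_algs_def
proof (intro allI impI)
  note ncp = assms(1)
  fix n and c :: "nat \<Rightarrow> bool" and y :: "nat \<Rightarrow> nat \<Rightarrow> 'a"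
  assume H: "(\<forall>l<n. c l \<in> UNIV \<and> y l \<in> gen_alg N {if c l then single i ai else single j aj}) \<and>
        (\<exists>l<n. \<exists>l'<n. c l \<noteq> c l')"
  then obtain l1 l2 where l12: "l1 < n" "l2 < n" "c l1 \<noteq> c l2" by blast
  have n2: "n \<ge> 2" using l12 by (cases "l1 = l2") auto
  obtain lT lF where lTF: "lT < n" "lF < n" "c lT" "\<not> c lF" using l12 by (cases "c l1") auto
  have gT: "y l \<in> gen_alg N {single i ai}" if "l < n" "c l" for l using H that by auto
  have gF: "y l \<in> gen_alg N {single j aj}" if "l < n" "\<not> c l" for l using H that by auto
  have PT: "(\<forall>m<N. y l m \<in> A m) \<and> (\<forall>m<N. m \<noteq> i \<longrightarrow> (\<exists>c. y l m = scaleC c 1))" if "l < n" "c l" for l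
    by (rule gen_alg_props[OF ncp assms(2) assms(5) gT[OF that]])
  have PF: "(\<forall>m<N. y l m \<in> A m) \<and> (\<forall>m<N. m \<noteq> j \<longrightarrow> (\<exists>c. y l m = scaleC c 1))" if "l < n" "\<not> c l" for l
    by (rule gen_alg_props[OF ncp assms(3) assms(6) gF[OF that]])
  show "cumulant N \<phi> n y = (\<lambda>_. 0)"
  proof (rule ext)
    fix m
    show "cumulant N \<phi> n y m = 0"
    proof (cases "m < N")
      case False
      have "(\<Prod>V\<in>\<pi>. condE N \<phi> (blockprod y V) m) = 0" if p: "\<pi> \<in> NC n" for \<pi>
      proof -
        have part: "is_partition \<pi> {0..<n}" using p unfolding NC_def by auto
        have "finite (\<Union> \<pi>)" using part unfolding is_partition_def by simp
        then have finp: "finite \<pi>" by (rule finite_UnionD)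
        have "0 \<in> \<Union> \<pi>" using part n2 unfolding is_partition_def by auto
        then obtain V where "V \<in> \<pi>" by blast
        moreover have "condE N \<phi> (blockprod y V) m = 0" using False unfolding condE_def by simp
        ultimately show ?thesis using finp by (meson prod_zero)
      qed
      then show ?thesis unfolding cumulant_def by simp
    next
      case True
      have inA: "\<forall>l<n. y l m \<in> A m" using PT PF True by blast
      obtain l0 cc where l0: "l0 < n" "y l0 m = scaleC cc 1"
      proof (cases "m = i")
        case False
        then show ?thesis using PT[OF lTF(1) lTF(3)] True that lTF(1) by blast
      next
        case mi: True
        then have "m \<noteq> j" using assms(4) by simp
        then show ?thesis using PF[OF lTF(2) lTF(4)] True that lTF(2) by blast
      qed
      have "cumulant N \<phi> n y m = (\<Sum>\<pi>\<in>NC n. (\<Prod>V\<in>\<pi>. \<phi> m (blockprod y V m)) * of_int (mobius (NC n) refines \<pi> (one_part n)))"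
        unfolding cumulant_def condE_def using True by simp
      also have "\<dots> = 0"
        by (rule scalar_cumulant_zero[of "A m" "\<phi> m" n l0 y m cc, OF ncp[rule_format, OF True] n2 l0(1) inA l0(2)])
      finally show ?thesis .
    qed
  qed
qed

end
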